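(* Let $T>0$, $V>0$, $\alpha_1,\alpha_2\ge0$ with $\alpha_1+\alpha_2=1$. Consider problem (P6): maximize $r$ over $r$, trajectories $x:[0,T]\to\mathbb{R}$ with $|\dot x(t)|\le V$, and scheduling functions $\pi_1,\pi_2:[0,T]\to\{0,1\}$ with $\pi_1(t)+\pi_2(t)\le1$ for all $t$, subject to $\frac1T\int_0^T\pi_k(t)\log_2(1+\bar Ph_k(x(t)))\,dt\ge\alpha_kr$ for $k=1,2$. Then the optimal UAV trajectory of (P6) is a hover-fly-hover trajectory, i.e. of the form $x(t)=x_{\rm I}$ for $t\in[0,t_{\rm I}]$, $x(t)=x_{\rm I}+(t-t_{\rm I})V$ for $t\in(t_{\rm I},T-t_{\rm F})$, $x(t)=x_{\rm F}$ for $t\in[T-t_{\rm F},T]$, with $-D/2\le x_{\rm I}\le x_{\rm F}\le D/2$, $t_{\rm I},t_{\rm F}\ge0$, $t_{\rm I}+(x_{\rm F}-x_{\rm I})/V+t_{\rm F}=T$. Furthermore: (1) if $-D/2<x_{\rm I}\le x_{\rm F}<D/2$, then $t_{\rm I}=t_{\rm F}=0$ and $VT=x_{\rm F}-x_{\rm I}$; (2) if $-D/2=x_{\rm I}\le x_{\rm F}<D/2$, then $t_{\rm I}=T-\frac{x_{\rm F}-x_{\rm I}}{V}$ and $t_{\rm F}=0$; (3) if $-D/2<x_{\rm I}\le x_{\rm F}=D/2$, then $t_{\rm I}=0$ and $t_{\rm F}=T-\frac{x_{\rm F}-x_{\rm I}}{V}$; (4) if $-D/2=x_{\rm I}<x_{\rm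 F}=D/2$, then $t_{\rm I}+t_{\rm F}+\frac DV=T$.
   Context: Fix $D>0$, $H>0$, $\beta_0>0$, $\bar P>0$. Ground users GU 1, GU 2 are at horizontal positions $x_1=-D/2$, $x_2=D/2$; for UAV horizontal position $x$ (altitude $H$), $h_k(x)=\beta_0/((x-x_k)^2+H^2)$. In (P6) the UAV uses TDMA: $\pi_k(t)=1$ means GU $k$ is served at time $t$ with the full power $\bar P$. *)

theory Defs
  imports "HOL-Analysis.Analysis"
begin

definition gu_pos :: "real \<Rightarrow> nat \<Rightarrow> real" where
  "gu_pos D k = (if k = 1 then - D / 2 else D / 2)"

definition chan_gain :: "real \<Rightarrow> real \<Rightarrow> real \<Rightarrow> nat \<Rightarrow> real \<Rightarrow> real" where
  "chan_gain D H beta0 k x = beta0 / ((x - gu_pos D k)^2 + H^2)"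

definition avg_rate :: "real \<Rightarrow> real \<Rightarrow> real \<Rightarrow> real \<Rightarrow> real \<Rightarrow> nat \<Rightarrow>
    (real \<Rightarrow> real) \<Rightarrow> (real \<Rightarrow> real) \<Rightarrow> real" where
  "avg_rate D H beta0 P T k x sch =
     (1 / T) * integral {0..T} (\<lambda>t. sch t * log 2 (1 + P * chan_gain D H beta0 k (x t)))"

text \<open>Feasibility for problem (P6). The speed constraint |x'(t)| \<le> V is read as
  V-Lipschitz continuity of x on [0,T] (so kinked trajectories are admissible).\<close>
definition feasible_P6 :: "real \<Rightarrow> real \<Rightarrow> real \<Rightarrow> real \<Rightarrow> real \<Rightarrow> real \<Rightarrow> real \<Rightarrow> real \<Rightarrow>
    real \<Rightarrow> (real \<Rightarrow> real) \<Rightarrow> (real \<Rightarrow> real) \<Rightarrow> (real \<Rightarrow> real) \<Rightarrow> bool" where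
  "feasible_P6 D H beta0 P T V a1 a2 r x pi1 pi2 \<longleftrightarrow>
     (\<forall>s\<in>{0..T}. \<forall>t\<in>{0..T}. \<bar>x t - x s\<bar> \<le> V * \<bar>t - s\<bar>) \<and>
     (\<forall>t\<in>{0..T}. pi1 t \<in> {0, 1} \<and> pi2 t \<in> {0, 1} \<and> pi1 t + pi2 t \<le> 1) \<and>
     (\<lambda>t. pi1 t * log 2 (1 + P * chan_gain D H beta0 1 (x t))) integrable_on {0..T} \<and>
     (\<lambda>t. pi2 t * log 2 (1 + P * chan_gain D H beta0 2 (x t))) integrable_on {0..T} \<and>
     avg_rate D H beta0 P T 1 x pi1 \<ge> a1 * r \<and>
     avg_rate D H beta0 P T 2 x pi2 \<ge> a2 * r"

definition hfh :: "real \<Rightarrow> real \<Rightarrow> real \<Rightarrow> (real \<Rightarrow> real) \<Rightarrow> real \<Rightarrow> real \<Rightarrow> real \<Rightarrow> real \<Rightarrow> bool" where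
  "hfh D T V x xI xF tI tF \<longleftrightarrow>
     - D / 2 \<le> xI \<and> xI \<le> xF \<and> xF \<le> D / 2 \<and> tI \<ge> 0 \<and> tF \<ge> 0 \<and>
     tI + (xF - xI) / V + tF = T \<and>
     (\<forall>t\<in>{0..tI}. x t = xI) \<and>
     (\<forall>t\<in>{tI<..<T - tF}. x t = xI + (t - tI) * V) \<and>
     (\<forall>t\<in>{T - tF..T}. x t = xF)"

end

theory Submission
  imports Defs "HOL-Analysis.Analysis"
begin

lemma sigma_finite_lebesgue: "sigma_finite_measure (lebesgue :: real measure)"
proof
  obtain A :: "real set set" where A: "countable A" "A \<subseteq> sets lborel" "\<Union>A = space lborel"
      "\<forall>a\<in>A. emeasure lborel a \<noteq> \<infinity>"
    using lborel.sigma_finite_countable by metis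
  have 1: "A \<subseteq> sets lebesgue" using A(2) by auto
  have 2: "\<Union>A = space lebesgue" using A(3) by simp
  have 3: "\<forall>a\<in>A. emeasure lebesgue a \<noteq> \<infinity>"
    using A(2,4) by auto
  show "\<exists>A::real set set. countable A \<and> A \<subseteq> sets lebesgue \<and> (\<Union>A) = space lebesgue \<and> (\<forall>a\<in>A. emeasure lebesgue a \<noteq> \<infinity>)"
    using A(1) 1 2 3 by blast
qed

lemma layer_cake:
  fixes f :: "real \<Rightarrow> real"
  assumes f: "f \<in> borel_measurable lebesgue" and nn: "\<And>x. 0 \<le> f x"
  shows "(\<integral>\<^sup>+x. ennreal (f x) \<partial>lebesgue) =
     (\<integral>\<^sup>+u. indicator {0..} u * emeasure lebesgue {x. u < f x} \<partial>lborel)"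
proof -
  interpret pair_sigma_finite "lebesgue :: real measure" "lborel :: real measure"
    unfolding pair_sigma_finite_def using sigma_finite_lebesgue sigma_finite_lborel by blast
  have meas: "(\<lambda>(x, u). indicator {(x,u). 0 \<le> u \<and> u < f x} (x, u) :: ennreal) \<in> borel_measurable (lebesgue \<Otimes>\<^sub>M lborel)"
  proof -
    have "{(x,u). 0 \<le> u \<and> u < f x} \<in> sets (lebesgue \<Otimes>\<^sub>M lborel)"
    proof -
      have "{(x,u). 0 \<le> u \<and> u < f x} = {p \<in> space (lebesgue \<Otimes>\<^sub>M lborel). 0 \<le> snd p \<and> snd p < f (fst p)}"
        by (auto simp: space_pair_measure)
      also have "\<dots> \<in> sets (lebesgue \<Otimes>\<^sub>M lborel)"
        using f by measurable
      finally show ?thesis .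
    qed
    then show ?thesis by (simp add: borel_measurable_indicator split_beta')
  qed
  have "(\<integral>\<^sup>+x. ennreal (f x) \<partial>lebesgue) = (\<integral>\<^sup>+x. (\<integral>\<^sup>+u. indicator {(x,u). 0 \<le> u \<and> u < f x} (x, u) \<partial>lborel) \<partial>lebesgue)"
  proof (rule nn_integral_cong)
    fix x
    have "(\<integral>\<^sup>+u. indicator {(x,u). 0 \<le> u \<and> u < f x} (x, u) \<partial>lborel) = (\<integral>\<^sup>+u. indicator {0..<f x} u \<partial>lborel)"
      by (rule nn_integral_cong) (auto simp: indicator_def)
    also have "\<dots> = ennreal (f x)" using nn[of x] by simp
    finally show "ennreal (f x) = (\<integral>\<^sup>+u. indicator {(x,u). 0 \<le> u \<and> u < f x} (x, u) \<partial>lborel)" by simp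
  qed
  also have "\<dots> = (\<integral>\<^sup>+u. (\<integral>\<^sup>+x. indicator {(x,u). 0 \<le> u \<and> u < f x} (x, u) \<partial>lebesgue) \<partial>lborel)"
    using Fubini'[of "\<lambda>x u. indicator {(x,u). 0 \<le> u \<and> u < f x} (x, u)"] meas by simp
  also have "\<dots> = (\<integral>\<^sup>+u. indicator {0..} u * emeasure lebesgue {x. u < f x} \<partial>lborel)"
  proof (rule nn_integral_cong)
    fix u :: real
    have mx: "{x. u < f x} \<in> sets lebesgue"
    proof -
      have "{x. u < f x} = {x \<in> space lebesgue. u < f x}" by simp
      also have "\<dots> \<in> sets lebesgue" using f by measurable
      finally show ?thesis .
    qed
    have "(\<integral>\<^sup>+x. indicator {(x,u). 0 \<le> u \<and> u < f x} (x, u) \<partial>lebesgue) = (\<integral>\<^sup>+x. indicator {0..} u * indicator {x. u < f x} x \<partial>lebesgue)"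
      by (rule nn_integral_cong) (auto simp: indicator_def)
    also have "\<dots> = indicator {0..} u * emeasure lebesgue {x. u < f x}"
      using mx by (simp add: nn_integral_cmult)
    finally show "(\<integral>\<^sup>+x. indicator {(x,u). 0 \<le> u \<and> u < f x} (x, u) \<partial>lebesgue) = indicator {0..} u * emeasure lebesgue {x. u < f x}" .
  qed
  finally show ?thesis .
qed

lemma layer_mono:
  fixes f g :: "real \<Rightarrow> real"
  assumes f: "f \<in> borel_measurable lebesgue" and nnf: "\<And>x. 0 \<le> f x"
  assumes g: "g \<in> borel_measurable lebesgue" and nng: "\<And>x. 0 \<le> g x"
  assumes le: "\<And>u. 0 \<le> u \<Longrightarrow> emeasure lebesgue {x. u < f x} \<le> emeasure lebesgue {x. u < g x}"
  shows "(\<integral>\<^sup>+x. ennreal (f x) \<partial>lebesgue) \<le> (\<integral>\<^sup>+x. ennreal (g x) \<partial>lebesgue)"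
  unfolding layer_cake[OF f nnf] layer_cake[OF g nng]
  apply (rule nn_integral_mono) using le by (simp add: indicator_def)

definition Gd :: "real \<Rightarrow> real \<Rightarrow> real \<Rightarrow> real \<Rightarrow> real" where
  "Gd H beta0 P z = log 2 (1 + P * (beta0 / (z^2 + H^2)))"

lemma gain_Gd: "log 2 (1 + P * chan_gain D H beta0 k x) = Gd H beta0 P (x - gu_pos D k)"
  by (simp add: Gd_def chan_gain_def)

lemma Gd_pos:
  assumes "H > 0" "beta0 > 0" "P > 0"
  shows "0 < Gd H beta0 P z"
proof -
  have "0 < z^2 + H^2" using assms by (simp add: add_nonneg_pos)
  then have "0 < P * (beta0 / (z^2 + H^2))" using assms by simp
  then show ?thesis unfolding Gd_def by simp
qed

lemma Gd_less:
  assumes "H > 0" "beta0 > 0" "P > 0" "\<bar>a\<bar> < \<bar>b\<bar>"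
  shows "Gd H beta0 P b < Gd H beta0 P a"
proof -
  have h: "0 < a^2 + H^2" using assms by (simp add: add_nonneg_pos)
  have "a^2 < b^2" using assms(4) by (metis abs_ge_zero power2_abs power_strict_mono zero_less_numeral)
  then have "a^2 + H^2 < b^2 + H^2" by simp
  then have "beta0 / (b^2 + H^2) < beta0 / (a^2 + H^2)"
    using h assms by (simp add: divide_strict_left_mono)
  then have "P * (beta0 / (b^2 + H^2)) < P * (beta0 / (a^2 + H^2))" using assms by (intro mult_strict_left_mono) auto
  moreover have "0 < P * (beta0 / (b^2 + H^2))" using assms
    by (simp add: add_nonneg_pos)
  ultimately show ?thesis unfolding Gd_def by simp
qed

lemma Gd_le:
  assumes "H > 0" "beta0 > 0" "P > 0" "\<bar>a\<bar> \<le> \<bar>b\<bar>"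
  shows "Gd H beta0 P b \<le> Gd H beta0 P a"
proof (cases "\<bar>a\<bar> = \<bar>b\<bar>")
  case True
  then have "a^2 = b^2" by (metis power2_abs)
  then show ?thesis by (simp add: Gd_def)
next
  case False
  then show ?thesis using Gd_less[OF assms(1-3), of a b] assms(4) by simp
qed

lemma Gd_less_iff:
  assumes "H > 0" "beta0 > 0" "P > 0"
  shows "Gd H beta0 P b < Gd H beta0 P a \<longleftrightarrow> \<bar>a\<bar> < \<bar>b\<bar>"
  using Gd_less[OF assms] Gd_le[OF assms] by (meson linorder_not_le)

lemma Gd_cont:
  assumes "H > 0" "beta0 > 0" "P > 0"
  shows "continuous_on UNIV (Gd H beta0 P)"
proof -
  have "\<And>z. 0 < z^2 + H^2" using assms by (simp add: add_nonneg_pos)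
  moreover have "\<And>z. 0 < 1 + P * (beta0 / (z^2 + H^2))"
    using assms by (simp add: add_nonneg_pos add_pos_nonneg)
  ultimately show ?thesis unfolding Gd_def
    by (intro continuous_intros) (auto simp: add_pos_pos dest: spec[of _ 0] less_imp_neq[symmetric])

qed

lemma crossing_ord:
  fixes z :: "real \<Rightarrow> real"
  assumes ab: "a \<le> b" and cont: "continuous_on {a..b} z"
    and lip: "\<forall>s\<in>{a..b}. \<forall>t\<in>{a..b}. \<bar>z t - z s\<bar> \<le> V * \<bar>t - s\<bar>"
    and za: "z a < L" and LR: "L < R" and zb: "R < z b"
  shows "\<exists>t1 t2. a \<le> t1 \<and> t1 \<le> t2 \<and> t2 \<le> b \<and> (\<forall>t\<in>{t1<..<t2}. L < z t \<and> z t < R) \<and> R - L \<le> V * (t2 - t1)"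
proof -
  define K1 where "K1 = {a..b} \<inter> z -` {..L}"
  have "closed K1" unfolding K1_def by (rule continuous_closed_preimage[OF cont]) auto
  then have "compact K1" unfolding K1_def by (meson Int_lower1 bounded_Int bounded_closed_interval compact_eq_bounded_closed)
  moreover have "a \<in> K1" using ab za unfolding K1_def by auto
  ultimately obtain t1 where t1: "t1 \<in> K1" "\<forall>y\<in>K1. y \<le> t1"
    using compact_attains_sup by blast
  have cont2: "continuous_on {t1..b} z" using t1(1) unfolding K1_def
    by (auto intro: continuous_on_subset[OF cont])
  define K2 where "K2 = {t1..b} \<inter> z -` {R..}"
  have "closed K2" unfolding K2_def by (rule continuous_closed_preimage[OF cont2]) auto
  then have "compact K2" unfolding K2_def by (meson Int_lower1 bounded_Int bounded_closed_interval compact_eq_bounded_closed)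
  moreover have "b \<in> K2" using t1 zb unfolding K1_def K2_def by auto
  ultimately obtain t2 where t2: "t2 \<in> K2" "\<forall>y\<in>K2. t2 \<le> y"
    using compact_attains_inf by blast
  have a1: "a \<le> t1" "t1 \<le> b" "z t1 \<le> L" using t1(1) unfolding K1_def by auto
  have a2: "t1 \<le> t2" "t2 \<le> b" "R \<le> z t2" using t2(1) unfolding K2_def by auto
  have mid: "\<forall>t\<in>{t1<..<t2}. L < z t \<and> z t < R"
  proof
    fix t assume t: "t \<in> {t1<..<t2}"
    have "t \<notin> K1" using t t1(2) by force
    then have "L < z t" using t a1 a2 unfolding K1_def by auto
    moreover have "t \<notin> K2" using t t2(2) by force
    then have "z t < R" using t a1 a2 unfolding K2_def by auto
    ultimately show "L < z t \<and> z t < R" by simp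
  qed
  have "t1 \<in> {a..b}" "t2 \<in> {a..b}" using a1 a2 by auto
  then have "\<bar>z t2 - z t1\<bar> \<le> V * \<bar>t2 - t1\<bar>" using lip by blast
  then have "R - L \<le> V * (t2 - t1)" using a1 a2 by auto
  then show ?thesis using a1 a2 mid by blast
qed

lemma crossing:
  fixes x :: "real \<Rightarrow> real"
  assumes lip: "\<forall>s\<in>{0..T}. \<forall>t\<in>{0..T}. \<bar>x t - x s\<bar> \<le> V * \<bar>t - s\<bar>" and V: "V > 0"
    and a: "a \<in> {0..T}" and b: "b \<in> {0..T}"
    and xa: "x a < L" and LR: "L < R" and xb: "R < x b"
  shows "\<exists>t1 t2. 0 \<le> t1 \<and> t1 \<le> t2 \<and> t2 \<le> T \<and> (\<forall>t\<in>{t1<..<t2}. L < x t \<and> x t < R) \<and> R - L \<le> V * (t2 - t1)"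
proof -
  have contg: "continuous_on {c..d} g" if "{c..d} \<subseteq> {0..T}" "\<forall>s\<in>{0..T}. \<forall>t\<in>{0..T}. \<bar>g t - g s\<bar> \<le> V * \<bar>t - s\<bar>" for g :: "real \<Rightarrow> real" and c d
  proof -
    have "continuous_on {0..T} g"
    proof (rule continuous_onI)
      fix t e assume "t \<in> {0..T}" "0 < (e::real)"
      show "\<exists>d>0. \<forall>t'\<in>{0..T}. dist t' t < d \<longrightarrow> dist (g t') (g t) \<le> e"
      proof (intro exI[of _ "e / V"] conjI ballI impI)
        show "0 < e / V" using V \<open>0 < e\<close> by simp
        fix t' assume "t' \<in> {0..T}" "dist t' t < e / V"
        then have "\<bar>g t' - g t\<bar> \<le> V * \<bar>t' - t\<bar>" using that(2) \<open>t \<in> {0..T}\<close> by blast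
        also have "\<dots> \<le> e" using \<open>dist t' t < e / V\<close> V by (simp add: dist_real_def field_simps)
        finally show "dist (g t') (g t) \<le> e" by (simp add: dist_real_def)
      qed
    qed
    then show ?thesis using continuous_on_subset that(1) by blast
  qed
  show ?thesis
  proof (cases "a \<le> b")
    case True
    have sub: "{a..b} \<subseteq> {0..T}" using a b by auto
    have "\<forall>s\<in>{a..b}. \<forall>t\<in>{a..b}. \<bar>x t - x s\<bar> \<le> V * \<bar>t - s\<bar>" using lip sub by blast
    from crossing_ord[OF True contg[OF sub lip] this xa LR xb]
    obtain t1 t2 where "a \<le> t1" "t1 \<le> t2" "t2 \<le> b" "\<forall>t\<in>{t1<..<t2}. L < x t \<and> x t < R" "R - L \<le> V * (t2 - t1)"
      by auto
    then show ?thesis using a b by (intro exI[of _ t1] exI[of _ t2]) auto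
  next
    case False
    then have ba: "b \<le> a" by simp
    have sub: "{b..a} \<subseteq> {0..T}" using a b by auto
    have lip': "\<forall>s\<in>{0..T}. \<forall>t\<in>{0..T}. \<bar>(- x t) - (- x s)\<bar> \<le> V * \<bar>t - s\<bar>"
    proof (intro ballI)
      fix s t assume "s \<in> {0..T}" "t \<in> {0..T}"
      then have "\<bar>x t - x s\<bar> \<le> V * \<bar>t - s\<bar>" using lip by blast
      then show "\<bar>(- x t) - (- x s)\<bar> \<le> V * \<bar>t - s\<bar>" by simp
    qed
    have "\<forall>s\<in>{b..a}. \<forall>t\<in>{b..a}. \<bar>(- x t) - (- x s)\<bar> \<le> V * \<bar>t - s\<bar>" using lip' sub by blast
    from crossing_ord[OF ba contg[OF sub lip'] this, of "-R" "-L"] xa LR xb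
    obtain t1 t2 where "b \<le> t1" "t1 \<le> t2" "t2 \<le> a" "\<forall>t\<in>{t1<..<t2}. - R < - x t \<and> - x t < - L" "- L - - R \<le> V * (t2 - t1)"
      by auto
    then show ?thesis using a b by (intro exI[of _ t1] exI[of _ t2]) auto
  qed
qed

definition yr :: "real \<Rightarrow> real \<Rightarrow> real \<Rightarrow> real \<Rightarrow> real" where
  "yr D V s t = max (- D / 2) (min (D / 2) (- D / 2 + V * (t - s)))"

definition q1 :: "real \<Rightarrow> real \<Rightarrow> real" where "q1 \<tau> t = (if t \<le> \<tau> then 1 else 0)"
definition q2 :: "real \<Rightarrow> real \<Rightarrow> real" where "q2 \<tau> t = (if t \<le> \<tau> then 0 else 1)"

lemma yr_range: "D > 0 \<Longrightarrow> - D / 2 \<le> yr D V s t \<and> yr D V s t \<le> D / 2"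
  unfolding yr_def by (auto simp: max_def min_def)

lemma yr_cont: "continuous_on UNIV (\<lambda>(s, t). yr D V s t)"
  unfolding yr_def split_beta by (intro continuous_intros)

lemma yr_cont_t: "continuous_on S (yr D V s)"
  unfolding yr_def by (intro continuous_intros)

lemma ramp_int1:
  fixes F :: "real \<Rightarrow> real"
  assumes "continuous_on {0..T} F" "0 \<le> \<tau>" "\<tau> \<le> T"
  shows "((\<lambda>t. q1 \<tau> t * F t) has_integral integral {0..\<tau>} F) {0..T}"
proof -
  have c1: "continuous_on {0..\<tau>} F" using assms continuous_on_subset by fastforce
  have i1: "((\<lambda>t. q1 \<tau> t * F t) has_integral integral {0..\<tau>} F) {0..\<tau>}"
  proof -
    have "(F has_integral integral {0..\<tau>} F) {0..\<tau>}" using integrable_continuous_real[OF c1] by blast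
    then show ?thesis by (rule has_integral_eq[rotated]) (simp add: q1_def)
  qed
  have i2: "((\<lambda>t. q1 \<tau> t * F t) has_integral 0) {\<tau>..T}"
    by (rule has_integral_spike_finite[of "{\<tau>}" _ _ "\<lambda>t. 0"]) (auto simp: q1_def)
  show ?thesis using has_integral_combine[OF assms(2,3) i1 i2] by simp
qed

lemma ramp_int2:
  fixes F :: "real \<Rightarrow> real"
  assumes "continuous_on {0..T} F" "0 \<le> \<tau>" "\<tau> \<le> T"
  shows "((\<lambda>t. q2 \<tau> t * F t) has_integral integral {\<tau>..T} F) {0..T}"
proof -
  have c1: "continuous_on {\<tau>..T} F" using assms continuous_on_subset by fastforce
  have i2: "((\<lambda>t. q2 \<tau> t * F t) has_integral integral {\<tau>..T} F) {\<tau>..T}"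
  proof -
    have "(F has_integral integral {\<tau>..T} F) {\<tau>..T}" using integrable_continuous_real[OF c1] by blast
    then show ?thesis by (rule has_integral_spike_finite[of "{\<tau>}", rotated 2]) (auto simp: q2_def)
  qed
  have i1: "((\<lambda>t. q2 \<tau> t * F t) has_integral 0) {0..\<tau>}"
    by (rule has_integral_eq[of _ "\<lambda>t. 0"]) (auto simp: q2_def)
  show ?thesis using has_integral_combine[OF assms(2,3) i1 i2] by simp
qed

lemma leb_Ico: "(a::real) \<le> b \<Longrightarrow> emeasure lebesgue {a..<b} = ennreal (b - a)"
  by simp
lemma leb_Ioc: "(a::real) \<le> b \<Longrightarrow> emeasure lebesgue {a<..b} = ennreal (b - a)"
  by simp
lemma leb_Icc_fm: "{a..b::real} \<in> lmeasurable"
  using lmeasurable_cbox[of a b] by simp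
lemma leb_Icc: "(a::real) \<le> b \<Longrightarrow> measure lebesgue {a..b} = b - a"
  by simp
lemma leb_sub_fm: "A \<in> sets lebesgue \<Longrightarrow> A \<subseteq> {a..b::real} \<Longrightarrow> A \<in> lmeasurable"
  using fmeasurableI2[OF leb_Icc_fm] by blast

lemma comp_cont: "continuous_on UNIV (G :: real \<Rightarrow> real) \<Longrightarrow> continuous_on S (\<lambda>t. G (yr D V s t + c))"
proof -
  assume G: "continuous_on UNIV G"
  have "continuous_on UNIV (\<lambda>t. yr D V s t + c)" by (intro continuous_on_add yr_cont_t continuous_on_const)
  from continuous_on_compose2[OF G this subset_UNIV]
  have "continuous_on UNIV (\<lambda>t. G (yr D V s t + c))" .
  then show ?thesis by (rule continuous_on_subset) simp
qed

lemma yr_alt: "yr D V s t = - D / 2 + max 0 (min D (V * (t - s)))"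
  unfolding yr_def by (auto simp: max_def min_def)

lemma dom:
  fixes x p1 p2 :: "real \<Rightarrow> real"
  assumes D: "D > 0" and H: "H > 0" and b: "beta0 > 0" and P: "P > 0" and T: "T > 0" and V: "V > 0"
  and lip: "\<forall>s\<in>{0..T}. \<forall>t\<in>{0..T}. \<bar>x t - x s\<bar> \<le> V * \<bar>t - s\<bar>"
  and sch: "\<forall>t\<in>{0..T}. p1 t \<in> {0, 1} \<and> p2 t \<in> {0, 1} \<and> p1 t + p2 t \<le> 1"
  and int1: "(\<lambda>t. p1 t * Gd H beta0 P (x t + D / 2)) integrable_on {0..T}"
  and int2: "(\<lambda>t. p2 t * Gd H beta0 P (x t - D / 2)) integrable_on {0..T}"
  shows "\<exists>s\<in>{- D / V..T}. \<exists>\<tau>\<in>{0..T}.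
     integral {0..T} (\<lambda>t. p1 t * Gd H beta0 P (x t + D / 2)) \<le> integral {0..\<tau>} (\<lambda>t. Gd H beta0 P (yr D V s t + D / 2)) \<and>
     integral {0..T} (\<lambda>t. p2 t * Gd H beta0 P (x t - D / 2)) \<le> integral {\<tau>..T} (\<lambda>t. Gd H beta0 P (yr D V s t - D / 2))"
proof -
  define G where "G = Gd H beta0 P"
  have Gpos: "\<And>z. 0 < G z" using Gd_pos[OF H b P] G_def by simp
  have Gless: "\<And>a c. G c < G a \<longleftrightarrow> \<bar>a\<bar> < \<bar>c\<bar>" unfolding G_def using Gd_less_iff[OF H b P] by blast
  have Gle: "\<And>a c. \<bar>a\<bar> \<le> \<bar>c\<bar> \<Longrightarrow> G c \<le> G a" unfolding G_def using Gd_le[OF H b P] by blast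
  have Gcont: "continuous_on UNIV G" unfolding G_def by (rule Gd_cont[OF H b P])
  have p1v: "p1 t = 0 \<or> p1 t = 1" if "t \<in> {0..T}" for t
  proof -
    have "p1 t \<in> {0, 1}" using sch that by blast
    then show ?thesis by simp
  qed
  have p2v: "p2 t = 0 \<or> p2 t = 1" if "t \<in> {0..T}" for t
  proof -
    have "p2 t \<in> {0, 1}" using sch that by blast
    then show ?thesis by simp
  qed
  have p12: "\<not> (p1 t = 1 \<and> p2 t = 1)" if "t \<in> {0..T}" for t
  proof -
    have "p1 t + p2 t \<le> 1" using sch that by blast
    then show ?thesis by auto
  qed
  define f1 where "f1 t = indicator {0..T} t * (p1 t * G (x t + D / 2))" for t
  define f2 where "f2 t = indicator {0..T} t * (p2 t * G (x t - D / 2))" for t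
  have f1m: "f1 \<in> borel_measurable lebesgue"
  proof -
    have "(\<lambda>t. p1 t * G (x t + D / 2) * indicator {0..T} t) \<in> borel_measurable lebesgue"
      using has_integral_implies_lebesgue_measurable_real[OF integrable_integral[OF int1[folded G_def]]] .
    moreover have "(\<lambda>t. p1 t * G (x t + D / 2) * indicator {0..T} t) = f1" by (auto simp: f1_def fun_eq_iff)
    ultimately show ?thesis by simp
  qed
  have f2m: "f2 \<in> borel_measurable lebesgue"
  proof -
    have "(\<lambda>t. p2 t * G (x t - D / 2) * indicator {0..T} t) \<in> borel_measurable lebesgue"
      using has_integral_implies_lebesgue_measurable_real[OF integrable_integral[OF int2[folded G_def]]] .
    moreover have "(\<lambda>t. p2 t * G (x t - D / 2) * indicator {0..T} t) = f2" by (auto simp: f2_def fun_eq_iff)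
    ultimately show ?thesis by simp
  qed
  have f1nn: "0 \<le> f1 t" for t
    using p1v[of t] Gpos[of "x t + D / 2"] by (cases "t \<in> {0..T}") (auto simp: f1_def)
  have f2nn: "0 \<le> f2 t" for t
    using p2v[of t] Gpos[of "x t - D / 2"] by (cases "t \<in> {0..T}") (auto simp: f2_def)
  have f1le: "f1 t \<le> G 0" for t
  proof (cases "t \<in> {0..T} \<and> p1 t = 1")
    case True then show ?thesis using Gle[of 0 "x t + D / 2"] by (simp add: f1_def)
  next
    case False then have "f1 t = 0" using p1v[of t] by (auto simp: f1_def indicator_def)
    then show ?thesis using Gpos[of 0] by simp
  qed
  have f2le: "f2 t \<le> G 0" for t
  proof (cases "t \<in> {0..T} \<and> p2 t = 1")
    case True then show ?thesis using Gle[of 0 "x t - D / 2"] by (simp add: f2_def)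
  next
    case False then have "f2 t = 0" using p2v[of t] by (auto simp: f2_def indicator_def)
    then show ?thesis using Gpos[of 0] by simp
  qed
  have levm: "{t. u < f t} \<in> sets lebesgue" if "f \<in> borel_measurable lebesgue" for u and f :: "real \<Rightarrow> real"
  proof -
    have "{t. u < f t} = {t \<in> space lebesgue. u < f t}" by simp
    also have "\<dots> \<in> sets lebesgue" using that by measurable
    finally show ?thesis .
  qed
  define S1 where "S1 = {t\<in>{0..T}. p1 t = 1}"
  define S2 where "S2 = {t\<in>{0..T}. p2 t = 1}"
  have S1eq: "S1 = {t. 0 < f1 t}"
  proof (intro set_eqI iffI)
    fix t assume "t \<in> S1" then show "t \<in> {t. 0 < f1 t}" using Gpos[of "x t + D / 2"] by (simp add: S1_def f1_def)
  next
    fix t assume "t \<in> {t. 0 < f1 t}"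
    then have "0 < f1 t" by simp
    then have "t \<in> {0..T}" "p1 t \<noteq> 0" by (auto simp: f1_def indicator_def of_bool_def split: if_splits)
    then show "t \<in> S1" using p1v[of t] by (simp add: S1_def)
  qed
  have S2eq: "S2 = {t. 0 < f2 t}"
  proof (intro set_eqI iffI)
    fix t assume "t \<in> S2" then show "t \<in> {t. 0 < f2 t}" using Gpos[of "x t - D / 2"] by (simp add: S2_def f2_def)
  next
    fix t assume "t \<in> {t. 0 < f2 t}"
    then have "0 < f2 t" by simp
    then have "t \<in> {0..T}" "p2 t \<noteq> 0" by (auto simp: f2_def indicator_def of_bool_def split: if_splits)
    then show "t \<in> S2" using p2v[of t] by (simp add: S2_def)
  qed
  have S1m: "S1 \<in> lmeasurable" using levm[OF f1m, of 0] S1eq by (intro leb_sub_fm[of _ 0 T]) (auto simp: S1_def)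
  have S2m: "S2 \<in> lmeasurable" using levm[OF f2m, of 0] S2eq by (intro leb_sub_fm[of _ 0 T]) (auto simp: S2_def)
  define \<tau> where "\<tau> = measure lebesgue S1"
  have S12: "measure lebesgue S1 + measure lebesgue S2 \<le> T"
  proof -
    have "S1 \<inter> S2 = {}" using p12 by (auto simp: S1_def S2_def)
    then have "measure lebesgue (S1 \<union> S2) = measure lebesgue S1 + measure lebesgue S2"
      using measure_Un2[OF S1m S2m] by (simp add: Diff_triv Int_commute)
    moreover have "measure lebesgue (S1 \<union> S2) \<le> measure lebesgue {0..T}"
      using S1m S2m by (intro measure_mono_fmeasurable) (auto simp: S1_def S2_def)
    ultimately show ?thesis using T by simp
  qed
  have tau_nn: "0 \<le> \<tau>" unfolding \<tau>_def by simp
  have tau_le: "\<tau> \<le> T - measure lebesgue S2" using S12 unfolding \<tau>_def by simp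
  have tau_T: "\<tau> \<le> T" using tau_le measure_nonneg[of lebesgue S2] by linarith
  define A1 where "A1 c = {t. G c < f1 t}" for c
  define A2 where "A2 c = {t. G c < f2 t}" for c
  have A1eq: "A1 c = {t\<in>S1. \<bar>x t + D / 2\<bar> < c}" if "0 \<le> c" for c
  proof (intro set_eqI iffI)
    fix t assume "t \<in> A1 c"
    then have lt: "G c < f1 t" by (simp add: A1_def)
    then have "0 < f1 t" using Gpos[of c] by simp
    then have "t \<in> S1" using S1eq by simp
    then have "f1 t = G (x t + D / 2)" by (simp add: S1_def f1_def)
    then show "t \<in> {t\<in>S1. \<bar>x t + D / 2\<bar> < c}" using lt Gless \<open>t \<in> S1\<close> that by auto
  next
    fix t assume "t \<in> {t\<in>S1. \<bar>x t + D / 2\<bar> < c}"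
    then show "t \<in> A1 c" using Gless that by (auto simp: A1_def S1_def f1_def)
  qed
  have A2eq: "A2 c = {t\<in>S2. \<bar>x t - D / 2\<bar> < c}" if "0 \<le> c" for c
  proof (intro set_eqI iffI)
    fix t assume "t \<in> A2 c"
    then have lt: "G c < f2 t" by (simp add: A2_def)
    then have "0 < f2 t" using Gpos[of c] by simp
    then have "t \<in> S2" using S2eq by simp
    then have "f2 t = G (x t - D / 2)" by (simp add: S2_def f2_def)
    then show "t \<in> {t\<in>S2. \<bar>x t - D / 2\<bar> < c}" using lt Gless \<open>t \<in> S2\<close> that by auto
  next
    fix t assume "t \<in> {t\<in>S2. \<bar>x t - D / 2\<bar> < c}"
    then show "t \<in> A2 c" using Gless that by (auto simp: A2_def S2_def f2_def)
  qed
  have A1m: "A1 c \<in> lmeasurable" if "0 \<le> c" for c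
    using levm[OF f1m, of "G c"] A1eq[OF that] by (intro leb_sub_fm[of _ 0 T]) (auto simp: A1_def S1_def)
  have A2m: "A2 c \<in> lmeasurable" if "0 \<le> c" for c
    using levm[OF f2m, of "G c"] A2eq[OF that] by (intro leb_sub_fm[of _ 0 T]) (auto simp: A2_def S2_def)
  define F1 where "F1 c = measure lebesgue (A1 c)" for c
  define F2 where "F2 c = measure lebesgue (A2 c)" for c
  have F1le: "F1 c \<le> \<tau>" if "0 \<le> c" for c
    unfolding F1_def \<tau>_def using A1m[OF that] S1m A1eq[OF that] by (intro measure_mono_fmeasurable) auto
  have F2le: "F2 c \<le> T - \<tau>" if "0 \<le> c" for c
  proof -
    have "F2 c \<le> measure lebesgue S2"
      unfolding F2_def using A2m[OF that] S2m A2eq[OF that] by (intro measure_mono_fmeasurable) auto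
    then show ?thesis using tau_le by simp
  qed
  have F1nn: "0 \<le> F1 c" for c unfolding F1_def by simp
  have F2nn: "0 \<le> F2 c" for c unfolding F2_def by simp
  have key: "F1 c1 - c1 / V \<le> T - (D - c2) / V - F2 c2"
    if c: "0 < c1" "c1 \<le> D" "0 < c2" "c2 \<le> D" "0 < F1 c1" "0 < F2 c2" for c1 c2
  proof (cases "D \<le> c1 + c2")
    case True
    have "F1 c1 + F2 c2 \<le> T" using F1le[of c1] F2le[of c2] c by simp
    moreover have "(D - c1 - c2) / V \<le> 0" using True V by (simp add: divide_nonpos_pos)
    moreover have "(D - c2) / V - c1 / V = (D - c1 - c2) / V" by (simp add: diff_divide_distrib)
    ultimately show ?thesis by linarith
  next
    case False
    have "A1 c1 \<noteq> {}" using c(5) unfolding F1_def by auto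
    then obtain a where a: "a \<in> A1 c1" by blast
    have "A2 c2 \<noteq> {}" using c(6) unfolding F2_def by auto
    then obtain bb where bb: "bb \<in> A2 c2" by blast
    have a': "a \<in> {0..T}" "x a < - D / 2 + c1" using a A1eq[of c1] c by (auto simp: S1_def)
    have b': "bb \<in> {0..T}" "D / 2 - c2 < x bb" using bb A2eq[of c2] c by (auto simp: S2_def)
    have LR: "- D / 2 + c1 < D / 2 - c2" using False by simp
    obtain t1 t2 where tt: "0 \<le> t1" "t1 \<le> t2" "t2 \<le> T"
      "\<forall>t\<in>{t1<..<t2}. - D / 2 + c1 < x t \<and> x t < D / 2 - c2" "D / 2 - c2 - (- D / 2 + c1) \<le> V * (t2 - t1)"
      using crossing[OF lip V a'(1) b'(1) a'(2) LR b'(2)] by blast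
    define I where "I = {t1<..<t2}"
    have Im: "I \<in> lmeasurable" unfolding I_def by (intro leb_sub_fm[of _ t1 t2]) auto
    have mI: "measure lebesgue I = t2 - t1"
    proof -
      have "emeasure lebesgue I = ennreal (t2 - t1)" unfolding I_def using tt by simp
      then show ?thesis unfolding measure_def using tt by simp
    qed
    have d1: "A1 c1 \<inter> A2 c2 = {}" using A1eq[of c1] A2eq[of c2] c p12 by (auto simp: S1_def S2_def)
    have d2: "(A1 c1 \<union> A2 c2) \<inter> I = {}"
    proof -
      have "A1 c1 \<inter> I = {}"
      proof (rule ccontr)
        assume "A1 c1 \<inter> I \<noteq> {}"
        then obtain t where "t \<in> A1 c1" "t \<in> I" by blast
        then have "x t < - D / 2 + c1" "- D / 2 + c1 < x t" using A1eq[of c1] c tt(4) I_def by auto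
        then show False by simp
      qed
      moreover have "A2 c2 \<inter> I = {}"
      proof (rule ccontr)
        assume "A2 c2 \<inter> I \<noteq> {}"
        then obtain t where "t \<in> A2 c2" "t \<in> I" by blast
        then have "D / 2 - c2 < x t" "x t < D / 2 - c2" using A2eq[of c2] c tt(4) I_def by auto
        then show False by simp
      qed
      ultimately show ?thesis by blast
    qed
    have u1: "measure lebesgue (A1 c1 \<union> A2 c2) = F1 c1 + F2 c2"
      unfolding F1_def F2_def using c
      using measure_Un2[OF A1m[of c1] A2m[of c2]] d1 by (simp add: Diff_triv Int_commute)
    have Um: "A1 c1 \<union> A2 c2 \<in> lmeasurable" using A1m[of c1] A2m[of c2] c by (intro fmeasurable.Un) auto
    have "measure lebesgue ((A1 c1 \<union> A2 c2) \<union> I) = measure lebesgue (A1 c1 \<union> A2 c2) + measure lebesgue I"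
      using measure_Un2[OF Um Im] d2 by (simp add: Diff_triv Int_commute)
    then have u2: "measure lebesgue ((A1 c1 \<union> A2 c2) \<union> I) = F1 c1 + F2 c2 + (t2 - t1)"
      using u1 mI by simp
    have "measure lebesgue ((A1 c1 \<union> A2 c2) \<union> I) \<le> measure lebesgue {0..T}"
      using A1m[of c1] A2m[of c2] c Im tt A1eq[of c1] A2eq[of c2]
      by (intro measure_mono_fmeasurable) (auto simp: S1_def S2_def I_def)
    then have "F1 c1 + F2 c2 + (t2 - t1) \<le> T" using u2 T by simp
    moreover have "(D - c1 - c2) / V \<le> t2 - t1" using tt(5) V by (simp add: field_simps)
    moreover have "(D - c2) / V - c1 / V = (D - c1 - c2) / V" by (simp add: diff_divide_distrib)
    ultimately show ?thesis by linarith
  qed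
  define U where "U = {F1 c - c / V | c. 0 < c \<and> c \<le> D \<and> 0 < F1 c}"
  define s where "s = (if U = {} then - D / V else Sup U)"
  have Ubd: "\<forall>u\<in>U. u \<le> \<tau>"
  proof
    fix u assume "u \<in> U"
    then obtain c where "u = F1 c - c / V" "0 < c" by (auto simp: U_def)
    then show "u \<le> \<tau>" using F1le[of c] V by (smt (verit) divide_pos_pos)
  qed
  have s_ge: "F1 c - c / V \<le> s" if "0 < c" "c \<le> D" "0 < F1 c" for c
  proof -
    have "F1 c - c / V \<in> U" using that by (auto simp: U_def)
    moreover have "bdd_above U" using Ubd by (auto simp: bdd_above_def)
    ultimately show ?thesis unfolding s_def by (auto intro: cSup_upper)
  qed
  have s_le: "s \<le> T - (D - c) / V - F2 c" if c: "0 < c" "c \<le> D" "0 < F2 c" for c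
  proof (cases "U = {}")
    case True
    have "F2 c \<le> T" using F2le[of c] tau_nn c by simp
    moreover have "(D - c) / V \<le> D / V" using c V divide_right_mono[of "D - c" D V] by linarith
    moreover have "s = - D / V" using True unfolding s_def by simp
    moreover have "0 < c / V" using c V by simp
    moreover have "(D - c) / V = D / V - c / V" by (simp add: diff_divide_distrib)
    ultimately show ?thesis by linarith
  next
    case False
    have "Sup U \<le> T - (D - c) / V - F2 c"
    proof (rule cSup_least[OF False])
      fix u assume "u \<in> U"
      then obtain c1 where "u = F1 c1 - c1 / V" "0 < c1" "c1 \<le> D" "0 < F1 c1" by (auto simp: U_def)
      then show "u \<le> T - (D - c) / V - F2 c" using key[of c1 c] c by blast
    qed
    moreover have "s = Sup U" using False unfolding s_def by simp
    ultimately show ?thesis by simp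
  qed
  have s_range: "s \<in> {- D / V..T}"
  proof (cases "U = {}")
    case True
    have "0 < D / V" using D V by simp
    moreover have "s = - D / V" using True unfolding s_def by simp
    ultimately show ?thesis using T by simp
  next
    case False
    then obtain u where u: "u \<in> U" by blast
    then obtain c where c: "u = F1 c - c / V" "0 < c" "c \<le> D" by (auto simp: U_def)
    have "c / V \<le> D / V" using c V by (simp add: divide_right_mono)
    then have "- D / V \<le> u" using c F1nn[of c] by linarith
    moreover have "bdd_above U" using Ubd by (auto simp: bdd_above_def)
    ultimately have "- D / V \<le> Sup U" using u by (meson cSup_upper order_trans)
    moreover have "Sup U \<le> \<tau>" using Ubd False by (intro cSup_least) blast+
    moreover have "s = Sup U" using False unfolding s_def by simp
    ultimately show ?thesis using tau_T by simp
  qed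
  have tau_range: "\<tau> \<in> {0..T}" using tau_nn tau_T by simp
  define y where "y = yr D V s"
  have y_range: "- D / 2 \<le> y t \<and> y t \<le> D / 2" for t unfolding y_def using yr_range[OF D] by blast
  have yc1: "continuous_on {0..T} (\<lambda>t. G (y t + D / 2))" unfolding y_def by (rule comp_cont[OF Gcont])
  have yc2: "continuous_on {0..T} (\<lambda>t. G (y t - D / 2))" unfolding y_def diff_conv_add_uminus by (rule comp_cont[OF Gcont])
  define J1 where "J1 = integral {0..\<tau>} (\<lambda>t. G (y t + D / 2))"
  define J2 where "J2 = integral {\<tau>..T} (\<lambda>t. G (y t - D / 2))"
  have hi1: "((\<lambda>t. q1 \<tau> t * G (y t + D / 2)) has_integral J1) {0..T}"
    unfolding J1_def by (rule ramp_int1[OF yc1 tau_nn tau_T])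
  have hi2: "((\<lambda>t. q2 \<tau> t * G (y t - D / 2)) has_integral J2) {0..T}"
    unfolding J2_def by (rule ramp_int2[OF yc2 tau_nn tau_T])
  define h1 where "h1 t = indicator {0..T} t * (q1 \<tau> t * G (y t + D / 2))" for t
  define h2 where "h2 t = indicator {0..T} t * (q2 \<tau> t * G (y t - D / 2))" for t
  have h1m: "h1 \<in> borel_measurable lebesgue"
  proof -
    have "(\<lambda>t. q1 \<tau> t * G (y t + D / 2) * indicator {0..T} t) \<in> borel_measurable lebesgue"
      using has_integral_implies_lebesgue_measurable_real[OF hi1] .
    moreover have "(\<lambda>t. q1 \<tau> t * G (y t + D / 2) * indicator {0..T} t) = h1" by (auto simp: h1_def fun_eq_iff)
    ultimately show ?thesis by simp
  qed
  have h2m: "h2 \<in> borel_measurable lebesgue"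
  proof -
    have "(\<lambda>t. q2 \<tau> t * G (y t - D / 2) * indicator {0..T} t) \<in> borel_measurable lebesgue"
      using has_integral_implies_lebesgue_measurable_real[OF hi2] .
    moreover have "(\<lambda>t. q2 \<tau> t * G (y t - D / 2) * indicator {0..T} t) = h2" by (auto simp: h2_def fun_eq_iff)
    ultimately show ?thesis by simp
  qed
  have h1nn: "0 \<le> h1 t" for t unfolding h1_def q1_def
    using less_imp_le[OF Gpos[of "y t + D / 2"]] by (intro mult_nonneg_nonneg) simp_all
  have h2nn: "0 \<le> h2 t" for t unfolding h2_def q2_def
    using less_imp_le[OF Gpos[of "y t - D / 2"]] by (intro mult_nonneg_nonneg) simp_all
  have levh1: "{t. u < h1 t} \<in> sets lebesgue" for u by (rule levm[OF h1m])
  have levh2: "{t. u < h2 t} \<in> sets lebesgue" for u by (rule levm[OF h2m])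
  have Gc0D: "continuous_on {0..D} G" using Gcont continuous_on_subset by blast
  have lev1: "emeasure lebesgue {t. u < f1 t} \<le> emeasure lebesgue {t. u < h1 t}" if u: "0 \<le> u" for u
  proof -
    consider (lo) "u < G D" | (hi) "G 0 \<le> u" | (mid) "G D \<le> u" "u < G 0" by linarith
    then show ?thesis
    proof cases
      case lo
      have "{t. u < f1 t} \<subseteq> S1" using S1eq u by auto
      then have "emeasure lebesgue {t. u < f1 t} \<le> emeasure lebesgue S1"
        using S1m by (intro emeasure_mono) auto
      also have "\<dots> = ennreal \<tau>" unfolding \<tau>_def using emeasure_eq_measure2[OF S1m] .
      also have "\<dots> = emeasure lebesgue {0..\<tau>}" using tau_nn by simp
      also have "\<dots> \<le> emeasure lebesgue {t. u < h1 t}"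
      proof (rule emeasure_mono)
        show "{0..\<tau>} \<subseteq> {t. u < h1 t}"
        proof
          fix t assume t: "t \<in> {0..\<tau>}"
          have "\<bar>y t + D / 2\<bar> \<le> \<bar>D\<bar>" using y_range[of t] D by auto
          then have "G D \<le> G (y t + D / 2)" by (rule Gle)
          then show "t \<in> {t. u < h1 t}" using t tau_T lo by (simp add: h1_def q1_def)
        qed
        show "{t. u < h1 t} \<in> sets lebesgue" by (rule levh1)
      qed
      finally show ?thesis .
    next
      case hi
      have "\<not> u < f1 t" for t using f1le[of t] hi by linarith
      then have "{t. u < f1 t} = {}" by blast
      then show ?thesis by simp
    next
      case mid
      have "\<exists>c. 0 \<le> c \<and> c \<le> D \<and> G c = u"
        by (rule IVT2'[OF mid(1) less_imp_le[OF mid(2)] less_imp_le[OF D] Gc0D])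
      then obtain c where c: "0 \<le> c" "c \<le> D" "G c = u" by blast
      have c0: "0 < c" using c mid by (cases "c = 0") auto
      have eqA: "{t. u < f1 t} = A1 c" unfolding A1_def c(3) ..
      define m where "m = min \<tau> (s + c / V)"
      have sub: "{0..<m} \<subseteq> {t. u < h1 t}"
      proof
        fix t assume t: "t \<in> {0..<m}"
        then have t1: "0 \<le> t" "t < \<tau>" "t < s + c / V" unfolding m_def by auto
        have "t - s < c / V" using t1 by simp
        then have "V * (t - s) < c" using V by (simp add: field_simps)
        then have "max 0 (min D (V * (t - s))) < c" using c0 by simp
        then have "\<bar>y t + D / 2\<bar> < \<bar>c\<bar>" using c0 unfolding y_def yr_alt by simp
        then have "G c < G (y t + D / 2)" using Gless by blast
        then show "t \<in> {t. u < h1 t}" using t1 tau_T c(3) by (simp add: h1_def q1_def)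
      qed
      have "emeasure lebesgue {t. u < f1 t} = ennreal (F1 c)"
        unfolding eqA F1_def using emeasure_eq_measure2[OF A1m[OF c(1)]] .
      also have "\<dots> \<le> emeasure lebesgue {0..<m}"
      proof (cases "F1 c = 0")
        case True then show ?thesis by simp
      next
        case False
        then have "0 < F1 c" using F1nn[of c] by simp
        then have "F1 c \<le> m" using F1le[OF c(1)] s_ge[OF c0 c(2)] unfolding m_def by simp
        moreover have "0 \<le> m" using \<open>0 < F1 c\<close> \<open>F1 c \<le> m\<close> by simp
        ultimately show ?thesis by simp
      qed
      also have "\<dots> \<le> emeasure lebesgue {t. u < h1 t}" using sub levh1 by (intro emeasure_mono) auto
      finally show ?thesis .
    qed
  qed
  have lev2: "emeasure lebesgue {t. u < f2 t} \<le> emeasure lebesgue {t. u < h2 t}" if u: "0 \<le> u" for u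
  proof -
    consider (lo) "u < G D" | (hi) "G 0 \<le> u" | (mid) "G D \<le> u" "u < G 0" by linarith
    then show ?thesis
    proof cases
      case lo
      have "{t. u < f2 t} \<subseteq> S2" using S2eq u by auto
      then have "emeasure lebesgue {t. u < f2 t} \<le> emeasure lebesgue S2"
        using S2m by (intro emeasure_mono) auto
      also have "\<dots> = ennreal (measure lebesgue S2)" using emeasure_eq_measure2[OF S2m] .
      also have "\<dots> \<le> ennreal (T - \<tau>)" using tau_le by (intro ennreal_leI) simp
      also have "\<dots> = emeasure lebesgue {\<tau><..T}" using tau_T by simp
      also have "\<dots> \<le> emeasure lebesgue {t. u < h2 t}"
      proof (rule emeasure_mono)
        show "{\<tau><..T} \<subseteq> {t. u < h2 t}"
        proof
          fix t assume t: "t \<in> {\<tau><..T}"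
          have "\<bar>y t - D / 2\<bar> \<le> \<bar>D\<bar>" using y_range[of t] D by auto
          then have "G D \<le> G (y t - D / 2)" by (rule Gle)
          then show "t \<in> {t. u < h2 t}" using t tau_nn lo by (simp add: h2_def q2_def)
        qed
        show "{t. u < h2 t} \<in> sets lebesgue" by (rule levh2)
      qed
      finally show ?thesis .
    next
      case hi
      have "\<not> u < f2 t" for t using f2le[of t] hi by linarith
      then have "{t. u < f2 t} = {}" by blast
      then show ?thesis by simp
    next
      case mid
      have "\<exists>c. 0 \<le> c \<and> c \<le> D \<and> G c = u"
        by (rule IVT2'[OF mid(1) less_imp_le[OF mid(2)] less_imp_le[OF D] Gc0D])
      then obtain c where c: "0 \<le> c" "c \<le> D" "G c = u" by blast
      have c0: "0 < c" using c mid by (cases "c = 0") auto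
      have eqA: "{t. u < f2 t} = A2 c" unfolding A2_def c(3) ..
      define m where "m = max \<tau> (s + (D - c) / V)"
      have sub: "{m<..T} \<subseteq> {t. u < h2 t}"
      proof
        fix t assume t: "t \<in> {m<..T}"
        then have t1: "t \<le> T" "\<tau> < t" "s + (D - c) / V < t" unfolding m_def by auto
        have "(D - c) / V < t - s" using t1 by simp
        then have "D - c < V * (t - s)" using V by (simp add: field_simps)
        then have "D - c < max 0 (min D (V * (t - s)))" using c0 by simp
        moreover have "max 0 (min D (V * (t - s))) \<le> D" using D by simp
        ultimately have "\<bar>y t - D / 2\<bar> < \<bar>c\<bar>" using c0 unfolding y_def yr_alt by simp
        then have "G c < G (y t - D / 2)" using Gless by blast
        then show "t \<in> {t. u < h2 t}" using t1 tau_nn c(3) by (simp add: h2_def q2_def)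
      qed
      have "emeasure lebesgue {t. u < f2 t} = ennreal (F2 c)"
        unfolding eqA F2_def using emeasure_eq_measure2[OF A2m[OF c(1)]] .
      also have "\<dots> \<le> emeasure lebesgue {m<..T}"
      proof (cases "F2 c = 0")
        case True then show ?thesis by simp
      next
        case False
        then have "0 < F2 c" using F2nn[of c] by simp
        then have "F2 c \<le> T - m" using F2le[OF c(1)] s_le[OF c0 c(2)] unfolding m_def by simp
        moreover have "m \<le> T" using \<open>0 < F2 c\<close> \<open>F2 c \<le> T - m\<close> by simp
        ultimately show ?thesis by simp
      qed
      also have "\<dots> \<le> emeasure lebesgue {t. u < h2 t}" using sub levh2 by (intro emeasure_mono) auto
      finally show ?thesis .
    qed
  qed
  have nn1: "(\<integral>\<^sup>+t. ennreal (f1 t) \<partial>lebesgue) \<le> (\<integral>\<^sup>+t. ennreal (h1 t) \<partial>lebesgue)"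
    by (rule layer_mono[OF f1m f1nn h1m h1nn lev1])
  have nn2: "(\<integral>\<^sup>+t. ennreal (f2 t) \<partial>lebesgue) \<le> (\<integral>\<^sup>+t. ennreal (h2 t) \<partial>lebesgue)"
    by (rule layer_mono[OF f2m f2nn h2m h2nn lev2])
  define I1 where "I1 = integral {0..T} (\<lambda>t. p1 t * G (x t + D / 2))"
  define I2 where "I2 = integral {0..T} (\<lambda>t. p2 t * G (x t - D / 2))"
  have e1: "(\<integral>\<^sup>+t. ennreal (f1 t) \<partial>lebesgue) = ennreal I1"
  proof -
    have "(\<integral>\<^sup>+t. ennreal (f1 t) \<partial>lebesgue) = (\<integral>\<^sup>+t. ennreal (f1 t) \<partial>lborel)" by (rule nn_integral_completion)
    also have "\<dots> = ennreal I1" unfolding f1_def I1_def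
      using p1v Gpos by (intro nn_integral_has_integral_lebesgue integrable_integral int1[folded G_def])
        (metis less_imp_le mult_eq_0_iff mult_nonneg_nonneg nle_le one_le_numeral order_trans zero_le_one)
    finally show ?thesis .
  qed
  have e2: "(\<integral>\<^sup>+t. ennreal (f2 t) \<partial>lebesgue) = ennreal I2"
  proof -
    have "(\<integral>\<^sup>+t. ennreal (f2 t) \<partial>lebesgue) = (\<integral>\<^sup>+t. ennreal (f2 t) \<partial>lborel)" by (rule nn_integral_completion)
    also have "\<dots> = ennreal I2" unfolding f2_def I2_def
      using p2v Gpos by (intro nn_integral_has_integral_lebesgue integrable_integral int2[folded G_def])
        (metis less_imp_le mult_eq_0_iff mult_nonneg_nonneg nle_le one_le_numeral order_trans zero_le_one)
    finally show ?thesis .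
  qed
  have e3: "(\<integral>\<^sup>+t. ennreal (h1 t) \<partial>lebesgue) = ennreal J1"
  proof -
    have "(\<integral>\<^sup>+t. ennreal (h1 t) \<partial>lebesgue) = (\<integral>\<^sup>+t. ennreal (h1 t) \<partial>lborel)" by (rule nn_integral_completion)
    also have "\<dots> = ennreal J1" unfolding h1_def
      using Gpos by (intro nn_integral_has_integral_lebesgue hi1) (simp add: q1_def less_imp_le)
    finally show ?thesis .
  qed
  have e4: "(\<integral>\<^sup>+t. ennreal (h2 t) \<partial>lebesgue) = ennreal J2"
  proof -
    have "(\<integral>\<^sup>+t. ennreal (h2 t) \<partial>lebesgue) = (\<integral>\<^sup>+t. ennreal (h2 t) \<partial>lborel)" by (rule nn_integral_completion)
    also have "\<dots> = ennreal J2" unfolding h2_def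
      using Gpos by (intro nn_integral_has_integral_lebesgue hi2) (simp add: q2_def less_imp_le)
    finally show ?thesis .
  qed
  have J1nn: "0 \<le> J1" using has_integral_nonneg[OF hi1] Gpos by (simp add: q1_def less_imp_le)
  have J2nn: "0 \<le> J2" using has_integral_nonneg[OF hi2] Gpos by (simp add: q2_def less_imp_le)
  have "I1 \<le> J1" using nn1 e1 e3 J1nn by (simp add: ennreal_le_iff)
  moreover have "I2 \<le> J2" using nn2 e2 e4 J2nn by (simp add: ennreal_le_iff)
  ultimately show ?thesis using s_range tau_range unfolding I1_def I2_def J1_def J2_def G_def y_def by blast
qed

lemma clamp_lip: "\<bar>max 0 (min D a) - max 0 (min D b)\<bar> \<le> \<bar>a - b\<bar>" for D a b :: real
  by (auto simp: max_def min_def abs_if)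

lemma yr_lip: "V > 0 \<Longrightarrow> \<bar>yr D V s t - yr D V s t'\<bar> \<le> V * \<bar>t - t'\<bar>"
proof -
  assume V: "V > 0"
  have "\<bar>yr D V s t - yr D V s t'\<bar> = \<bar>max 0 (min D (V * (t - s))) - max 0 (min D (V * (t' - s)))\<bar>"
    unfolding yr_alt by simp
  also have "\<dots> \<le> \<bar>V * (t - s) - V * (t' - s)\<bar>" by (rule clamp_lip)
  also have "\<bar>V * (t - s) - V * (t' - s)\<bar> = \<bar>V * (t - t')\<bar>" by (simp add: algebra_simps)
  also have "\<dots> = V * \<bar>t - t'\<bar>" using V by (simp add: abs_mult)
  finally show ?thesis .
qed

lemma ramp_hfh:
  fixes D T V s :: real
  assumes D: "D > 0" and T: "T > 0" and V: "V > 0" and s: "- D / V \<le> s" "s \<le> T"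
  defines "xI \<equiv> yr D V s 0" and "xF \<equiv> yr D V s T" and "tI \<equiv> max 0 s" and "tF \<equiv> max 0 (T - s - D / V)"
  shows "hfh D T V (yr D V s) xI xF tI tF \<and>
    (- D / 2 < xI \<and> xF < D / 2 \<longrightarrow> tI = 0 \<and> tF = 0 \<and> V * T = xF - xI) \<and>
    (- D / 2 = xI \<and> xF < D / 2 \<longrightarrow> tI = T - (xF - xI) / V \<and> tF = 0) \<and>
    (- D / 2 < xI \<and> xF = D / 2 \<longrightarrow> tI = 0 \<and> tF = T - (xF - xI) / V) \<and>
    (- D / 2 = xI \<and> xI < xF \<and> xF = D / 2 \<longrightarrow> tI + tF + D / V = T)"
proof -
  define d where "d = D / V"
  have Dd: "D = V * d" using V unfolding d_def by simp
  have d0: "d > 0" using D V unfolding d_def by simp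
  have s': "- d \<le> s" using s unfolding d_def by simp
  have yv: "yr D V s t = - D / 2 + V * max 0 (min d (t - s))" for t
  proof -
    have "min D (V * (t - s)) = V * min d (t - s)" using Dd V by (simp add: min_mult_distrib_left)
    moreover have "max 0 (V * min d (t - s)) = V * max 0 (min d (t - s))" using V by (simp add: max_mult_distrib_left)
    ultimately show ?thesis unfolding yr_alt by simp
  qed
  have xI: "xI = - D / 2 + V * max 0 (- s)" unfolding xI_def yv using s' d0 by (simp add: min_def max_def)
  have xF: "xF = - D / 2 + V * min d (T - s)" unfolding xF_def yv using s d0 by (simp add: min_def max_def)
  have tF: "tF = max 0 (T - s - d)" unfolding tF_def d_def ..
  have diff: "(xF - xI) / V = min d (T - s) - max 0 (- s)"
  proof -
    have "xF - xI = V * (min d (T - s) - max 0 (- s))" unfolding xI xF by (simp add: algebra_simps)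
    then show ?thesis using V by simp
  qed
  have sum: "tI + (xF - xI) / V + tF = T" unfolding diff tF tI_def by (simp add: max_def min_def)
  have h1: "- D / 2 \<le> xI" unfolding xI using V by simp
  have h2: "xI \<le> xF"
  proof -
    have "max 0 (- s) \<le> min d (T - s)" using s' s T d0 by simp
    then have "V * max 0 (- s) \<le> V * min d (T - s)" using V by (intro mult_left_mono) auto
    then show ?thesis unfolding xI xF by simp
  qed
  have h3: "xF \<le> D / 2"
  proof -
    have "V * min d (T - s) \<le> V * d" using V by (intro mult_left_mono) auto
    then show ?thesis unfolding xF using Dd by simp
  qed
  have h4: "\<forall>t\<in>{0..tI}. yr D V s t = xI"
  proof
    fix t assume t: "t \<in> {0..tI}"
    show "yr D V s t = xI"
    proof (cases "s \<le> 0")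
      case True then have "t = 0" using t unfolding tI_def by simp
      then show ?thesis unfolding xI_def by simp
    next
      case False then have "t \<le> s" using t unfolding tI_def by simp
      then show ?thesis unfolding yv xI using False d0 by (simp add: max_def min_def)
    qed
  qed
  have h5: "\<forall>t\<in>{tI<..<T - tF}. yr D V s t = xI + (t - tI) * V"
  proof
    fix t assume t: "t \<in> {tI<..<T - tF}"
    then have t1: "0 < t - s" "t - s < d" "0 < t" unfolding tI_def tF by auto
    have "yr D V s t = - D / 2 + V * (t - s)" unfolding yv using t1 by simp
    also have "\<dots> = xI + (t - tI) * V" unfolding xI tI_def by (simp add: max_def algebra_simps)
    finally show "yr D V s t = xI + (t - tI) * V" .
  qed
  have h6: "\<forall>t\<in>{T - tF..T}. yr D V s t = xF"
  proof
    fix t assume t: "t \<in> {T - tF..T}"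
    show "yr D V s t = xF"
    proof (cases "T - s - d \<le> 0")
      case True then have "t = T" using t unfolding tF by simp
      then show ?thesis unfolding xF_def by simp
    next
      case False then have "d \<le> t - s" using t unfolding tF by simp
      then show ?thesis unfolding yv xF using False d0 by (simp add: max_def min_def)
    qed
  qed
  have hf: "hfh D T V (yr D V s) xI xF tI tF"
    unfolding hfh_def using h1 h2 h3 h4 h5 h6 sum by (simp add: tI_def tF_def)
  have c1: "- D / 2 < xI \<and> xF < D / 2 \<longrightarrow> tI = 0 \<and> tF = 0 \<and> V * T = xF - xI"
  proof
    assume a: "- D / 2 < xI \<and> xF < D / 2"
    then have "0 < V * max 0 (- s)" unfolding xI by simp
    then have "s < 0" using V by (auto simp: max_def mult_less_0_iff split: if_splits)
    moreover have "V * min d (T - s) < V * d" using a Dd unfolding xF by simp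
    then have "T - s < d" using V by (simp add: min_def split: if_splits)
    ultimately show "tI = 0 \<and> tF = 0 \<and> V * T = xF - xI"
      unfolding tI_def tF xI xF by (simp add: max_def min_def algebra_simps)
  qed
  have c2: "- D / 2 = xI \<and> xF < D / 2 \<longrightarrow> tI = T - (xF - xI) / V \<and> tF = 0"
  proof
    assume a: "- D / 2 = xI \<and> xF < D / 2"
    have "V * min d (T - s) < V * d" using a Dd unfolding xF by simp
    then have "T - s < d" using V by (simp add: min_def split: if_splits)
    then have "tF = 0" unfolding tF by simp
    then show "tI = T - (xF - xI) / V \<and> tF = 0" using sum by simp
  qed
  have c3: "- D / 2 < xI \<and> xF = D / 2 \<longrightarrow> tI = 0 \<and> tF = T - (xF - xI) / V"
  proof
    assume a: "- D / 2 < xI \<and> xF = D / 2"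
    then have "0 < V * max 0 (- s)" unfolding xI by simp
    then have "s < 0" using V by (auto simp: max_def mult_less_0_iff split: if_splits)
    then have "tI = 0" unfolding tI_def by simp
    then show "tI = 0 \<and> tF = T - (xF - xI) / V" using sum by simp
  qed
  have c4: "- D / 2 = xI \<and> xI < xF \<and> xF = D / 2 \<longrightarrow> tI + tF + D / V = T"
  proof
    assume a: "- D / 2 = xI \<and> xI < xF \<and> xF = D / 2"
    then have "xF - xI = D" by simp
    then show "tI + tF + D / V = T" using sum by simp
  qed
  show ?thesis using hf c1 c2 c3 c4 by blast
qed

lemma int_split_min:
  fixes F :: "real \<Rightarrow> real"
  assumes F: "continuous_on UNIV F" and tau: "0 \<le> \<tau>" "\<tau> \<le> T"
  shows "integral {0..\<tau>} F = integral {0..T} (\<lambda>t. F (min t \<tau>)) - (T - \<tau>) * F \<tau>"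
proof -
  have i1: "((\<lambda>t. F (min t \<tau>)) has_integral integral {0..\<tau>} F) {0..\<tau>}"
  proof -
    have "(F has_integral integral {0..\<tau>} F) {0..\<tau>}"
      using integrable_continuous_real[OF continuous_on_subset[OF F subset_UNIV]] by blast
    then show ?thesis by (rule has_integral_eq[rotated]) simp
  qed
  have i2: "((\<lambda>t. F (min t \<tau>)) has_integral ((T - \<tau>) * F \<tau>)) {\<tau>..T}"
  proof -
    have "((\<lambda>t. F \<tau>) has_integral ((T - \<tau>) * F \<tau>)) {\<tau>..T}" using has_integral_const_real[of "F \<tau>" \<tau> T] tau by simp
    then show ?thesis by (rule has_integral_eq[rotated]) simp
  qed
  have "((\<lambda>t. F (min t \<tau>)) has_integral (integral {0..\<tau>} F + (T - \<tau>) * F \<tau>)) {0..T}"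
    by (rule has_integral_combine[OF tau i1 i2])
  then have "integral {0..T} (\<lambda>t. F (min t \<tau>)) = integral {0..\<tau>} F + (T - \<tau>) * F \<tau>" by blast
  then show ?thesis by simp
qed

lemma int_param_cont:
  fixes F :: "real \<Rightarrow> real \<Rightarrow> real"
  assumes F: "continuous_on UNIV (\<lambda>(s, t). F s t)" and T: "0 \<le> T"
  shows "continuous_on (UNIV \<times> {0..T}) (\<lambda>p. integral {0..snd p} (F (fst p)))"
proof -
  have Fs: "continuous_on UNIV (F s)" for s
  proof -
    have "continuous_on UNIV (\<lambda>t. (s, t))" by (intro continuous_intros)
    from continuous_on_compose2[OF F this subset_UNIV] show ?thesis by simp
  qed
  have c1: "continuous_on (UNIV \<times> {0..T}) (\<lambda>p. integral {0..T} (\<lambda>t. F (fst p) (min t (snd p))))"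
  proof -
    have "continuous_on UNIV (\<lambda>q :: (real \<times> real) \<times> real. (fst (fst q), min (snd q) (snd (fst q))))"
      by (intro continuous_intros)
    from continuous_on_compose2[OF F this subset_UNIV]
    have "continuous_on UNIV (\<lambda>q :: (real \<times> real) \<times> real. F (fst (fst q)) (min (snd q) (snd (fst q))))" by simp
    moreover have eq: "(\<lambda>(p, t). F (fst p) (min t (snd p))) = (\<lambda>q :: (real \<times> real) \<times> real. F (fst (fst q)) (min (snd q) (snd (fst q))))"
      by (simp add: fun_eq_iff split_beta)
    ultimately have "continuous_on UNIV (\<lambda>(p, t). F (fst p) (min t (snd p)))"
      by (simp only: eq)
    then have "continuous_on ((UNIV \<times> {0..T}) \<times> cbox 0 T) (\<lambda>(p, t). F (fst p) (min t (snd p)))"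
      by (rule continuous_on_subset) (rule subset_UNIV)
    then have "continuous_on (UNIV \<times> {0..T}) (\<lambda>p. integral (cbox 0 T) (\<lambda>t. F (fst p) (min t (snd p))))"
      by (rule integral_continuous_on_param)
    then show ?thesis by simp
  qed
  have c2: "continuous_on (UNIV \<times> {0..T}) (\<lambda>p. (T - snd p) * F (fst p) (snd p))"
  proof -
    have "continuous_on UNIV (\<lambda>p :: real \<times> real. p)" by (intro continuous_intros)
    from continuous_on_compose2[OF F this subset_UNIV]
    have "continuous_on UNIV (\<lambda>p :: real \<times> real. F (fst p) (snd p))" by (simp add: split_beta)
    then have "continuous_on UNIV (\<lambda>p :: real \<times> real. (T - snd p) * F (fst p) (snd p))"
      by (intro continuous_intros)
    then show ?thesis by (rule continuous_on_subset) simp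
  qed
  have "continuous_on (UNIV \<times> {0..T}) (\<lambda>p. integral {0..T} (\<lambda>t. F (fst p) (min t (snd p))) - (T - snd p) * F (fst p) (snd p))"
    by (rule continuous_on_diff[OF c1 c2])
  moreover have "continuous_on (UNIV \<times> {0..T}) (\<lambda>p. integral {0..T} (\<lambda>t. F (fst p) (min t (snd p))) - (T - snd p) * F (fst p) (snd p))
     = continuous_on (UNIV \<times> {0..T}) (\<lambda>p. integral {0..snd p} (F (fst p)))"
  proof (rule continuous_on_cong[OF refl])
    fix p :: "real \<times> real" assume p: "p \<in> UNIV \<times> {0..T}"
    have "0 \<le> snd p" "snd p \<le> T" using p by auto
    then show "integral {0..T} (\<lambda>t. F (fst p) (min t (snd p))) - (T - snd p) * F (fst p) (snd p) = integral {0..snd p} (F (fst p))"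
      using int_split_min[OF Fs, of "snd p" T] by simp
  qed
  ultimately show ?thesis by simp
qed

lemma gain1: "log 2 (1 + P * chan_gain D H beta0 1 x) = Gd H beta0 P (x + D / 2)"
  unfolding gain_Gd gu_pos_def by simp
lemma gain2: "log 2 (1 + P * chan_gain D H beta0 2 x) = Gd H beta0 P (x - D / 2)"
  unfolding gain_Gd gu_pos_def by simp

theorem proposition4:
  fixes D H beta0 P T V a1 a2 :: real
  assumes "D > 0" "H > 0" "beta0 > 0" "P > 0" "T > 0" "V > 0"
    and "a1 \<ge> 0" "a2 \<ge> 0" "a1 + a2 = 1"
  shows "\<exists>r x pi1 pi2 xI xF tI tF.
    feasible_P6 D H beta0 P T V a1 a2 r x pi1 pi2 \<and>
    (\<forall>r' x' pi1' pi2'. feasible_P6 D H beta0 P T V a1 a2 r' x' pi1' pi2' \<longrightarrow> r' \<le> r) \<and>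
    hfh D T V x xI xF tI tF \<and>
    (- D / 2 < xI \<and> xF < D / 2 \<longrightarrow> tI = 0 \<and> tF = 0 \<and> V * T = xF - xI) \<and>
    (- D / 2 = xI \<and> xF < D / 2 \<longrightarrow> tI = T - (xF - xI) / V \<and> tF = 0) \<and>
    (- D / 2 < xI \<and> xF = D / 2 \<longrightarrow> tI = 0 \<and> tF = T - (xF - xI) / V) \<and>
    (- D / 2 = xI \<and> xI < xF \<and> xF = D / 2 \<longrightarrow> tI + tF + D / V = T)"
proof -
  note D = assms(1) and H = assms(2) and b = assms(3) and P = assms(4) and T = assms(5) and V = assms(6)
  note a = assms(7,8,9)
  define G where "G = Gd H beta0 P"
  have Gpos: "\<And>z. 0 < G z" using Gd_pos[OF H b P] G_def by simp
  have Gcont: "continuous_on UNIV G" unfolding G_def by (rule Gd_cont[OF H b P])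
  define F1 where "F1 s t = G (yr D V s t + D / 2)" for s t
  define F2 where "F2 s t = G (yr D V s t - D / 2)" for s t
  have F1c: "continuous_on UNIV (\<lambda>(s, t). F1 s t)"
  proof -
    have "continuous_on UNIV (\<lambda>p. yr D V (fst p) (snd p) + D / 2)"
      using yr_cont[of D V] by (simp add: split_beta continuous_on_add continuous_on_const)
    from continuous_on_compose2[OF Gcont this subset_UNIV] show ?thesis by (simp add: F1_def split_beta)
  qed
  have F2c: "continuous_on UNIV (\<lambda>(s, t). F2 s t)"
  proof -
    have "continuous_on UNIV (\<lambda>p. yr D V (fst p) (snd p) - D / 2)"
      using yr_cont[of D V] by (simp add: split_beta continuous_on_diff continuous_on_const)
    from continuous_on_compose2[OF Gcont this subset_UNIV] show ?thesis by (simp add: F1_def F2_def split_beta)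
  qed
  have F1s: "continuous_on S (F1 s)" for s S unfolding F1_def using comp_cont[OF Gcont] .
  have F2s: "continuous_on S (F2 s)" for s S unfolding F2_def diff_conv_add_uminus using comp_cont[OF Gcont] .
  define R1 where "R1 p = integral {0..snd p} (F1 (fst p)) / T" for p :: "real \<times> real"
  define R2 where "R2 p = (integral {0..T} (F2 (fst p)) - integral {0..snd p} (F2 (fst p))) / T" for p :: "real \<times> real"
  have R2eq: "R2 (s, \<tau>) = integral {\<tau>..T} (F2 s) / T" if "0 \<le> \<tau>" "\<tau> \<le> T" for s \<tau>
  proof -
    have "integral {0..\<tau>} (F2 s) + integral {\<tau>..T} (F2 s) = integral {0..T} (F2 s)"
      by (rule Henstock_Kurzweil_Integration.integral_combine[OF that integrable_continuous_real[OF F2s]])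
    then show ?thesis unfolding R2_def by (simp add: algebra_simps)
  qed
  have R1c: "continuous_on (UNIV \<times> {0..T}) R1"
  proof -
    have "continuous_on (UNIV \<times> {0..T}) (\<lambda>p. integral {0..snd p} (F1 (fst p)))"
      by (rule int_param_cont[OF F1c]) (use T in simp)
    then show ?thesis unfolding R1_def by (intro continuous_on_divide continuous_on_const) (use T in auto)
  qed
  have R2c: "continuous_on (UNIV \<times> {0..T}) R2"
  proof -
    have c1: "continuous_on (UNIV \<times> {0..T}) (\<lambda>p. integral {0..snd p} (F2 (fst p)))"
      by (rule int_param_cont[OF F2c]) (use T in simp)
    have "continuous_on (UNIV \<times> cbox 0 T) (\<lambda>(p :: real \<times> real, t). F2 (fst p) t)"
    proof -
      have "continuous_on UNIV (\<lambda>q :: (real \<times> real) \<times> real. (fst (fst q), snd q))" by (intro continuous_intros)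
      from continuous_on_compose2[OF F2c this subset_UNIV]
      have "continuous_on UNIV (\<lambda>q :: (real \<times> real) \<times> real. F2 (fst (fst q)) (snd q))" by simp
      then have "continuous_on UNIV (\<lambda>(p :: real \<times> real, t). F2 (fst p) t)" by (simp add: split_beta')
      then show ?thesis by (rule continuous_on_subset) (rule subset_UNIV)
    qed
    then have "continuous_on (UNIV :: (real \<times> real) set) (\<lambda>p. integral (cbox 0 T) (F2 (fst p)))"
      using integral_continuous_on_param[of UNIV 0 T "\<lambda>p t. F2 (fst p) t"] by simp
    then have "continuous_on (UNIV :: (real \<times> real) set) (\<lambda>p. integral {0..T} (F2 (fst p)))"
      by (simp add: cbox_interval)
    then have c2: "continuous_on (UNIV \<times> {0..T}) (\<lambda>p. integral {0..T} (F2 (fst p)))"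
      by (rule continuous_on_subset) simp
    show ?thesis unfolding R2_def using c1 c2 T by (intro continuous_on_divide continuous_on_diff continuous_on_const) auto
  qed
  define hh where "hh p = (if a1 = 0 then R2 p / a2 else if a2 = 0 then R1 p / a1 else min (R1 p / a1) (R2 p / a2))"
    for p :: "real \<times> real"
  define K where "K = {- D / V..T} \<times> {0..T}"
  have KU: "K \<subseteq> UNIV \<times> {0..T}" unfolding K_def by auto
  have hhc: "continuous_on K hh"
  proof -
    have c1: "continuous_on K R1" using R1c KU continuous_on_subset by blast
    have c2: "continuous_on K R2" using R2c KU continuous_on_subset by blast
    show ?thesis
    proof (cases "a1 = 0")
      case True
      then have "a2 \<noteq> 0" using a by simp
      then show ?thesis unfolding hh_def using True c2 by (simp add: continuous_on_divide continuous_on_const)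
    next
      case False
      show ?thesis
      proof (cases "a2 = 0")
        case True
        then show ?thesis unfolding hh_def using False c1 by (simp add: continuous_on_divide continuous_on_const)
      next
        case False2: False
        have "continuous_on K (\<lambda>p. min (R1 p / a1) (R2 p / a2))"
          using c1 c2 False False2 by (intro continuous_on_min continuous_on_divide continuous_on_const) auto
        then show ?thesis unfolding hh_def using False False2 by simp
      qed
    qed
  qed
  have Kc: "compact K" unfolding K_def by (intro compact_Times compact_Icc)
  have Kne: "K \<noteq> {}"
  proof -
    have "0 < D / V" using D V by simp
    then have "(0, 0) \<in> K" unfolding K_def using T by simp
    then show ?thesis by blast
  qed
  obtain p0 where p0: "p0 \<in> K" "\<forall>p\<in>K. hh p \<le> hh p0"
    using continuous_attains_sup[OF Kc Kne hhc] by blast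
  obtain s0 \<tau>0 where st0: "p0 = (s0, \<tau>0)" by (cases p0)
  have s0: "- D / V \<le> s0" "s0 \<le> T" and t0: "0 \<le> \<tau>0" "\<tau>0 \<le> T" using p0(1) st0 unfolding K_def by auto
  have hh_le: "r' \<le> hh (s, \<tau>)" if "a1 * r' \<le> R1 (s, \<tau>)" "a2 * r' \<le> R2 (s, \<tau>)" for r' s \<tau>
  proof (cases "a1 = 0")
    case True
    then have "a2 = 1" using a by simp
    then show ?thesis using that True unfolding hh_def by simp
  next
    case False
    show ?thesis
    proof (cases "a2 = 0")
      case True
      then have "a1 = 1" using a by simp
      then show ?thesis using that True unfolding hh_def by simp
    next
      case False2: False
      have "0 < a1" using False a(1) by simp
      then have "r' \<le> R1 (s, \<tau>) / a1" using that(1) by (simp add: pos_le_divide_eq mult.commute)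
      moreover have "0 < a2" using False2 a(2) by simp
      then have "r' \<le> R2 (s, \<tau>) / a2" using that(2) by (simp add: pos_le_divide_eq mult.commute)
      ultimately show ?thesis using False False2 unfolding hh_def by simp
    qed
  qed
  have R1nn: "0 \<le> R1 (s, \<tau>)" if "0 \<le> \<tau>" for s \<tau>
  proof -
    have "0 \<le> integral {0..\<tau>} (F1 s)"
      using Gpos by (intro integral_nonneg integrable_continuous_real F1s) (simp add: F1_def less_imp_le)
    then show ?thesis unfolding R1_def using T by simp
  qed
  have R2nn: "0 \<le> R2 (s, \<tau>)" if "0 \<le> \<tau>" "\<tau> \<le> T" for s \<tau>
  proof -
    have "0 \<le> integral {\<tau>..T} (F2 s)"
      using Gpos by (intro integral_nonneg integrable_continuous_real F2s) (simp add: F2_def less_imp_le)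
    then show ?thesis unfolding R2eq[OF that] using T by simp
  qed
  have hh_ach: "a1 * hh (s, \<tau>) \<le> R1 (s, \<tau>) \<and> a2 * hh (s, \<tau>) \<le> R2 (s, \<tau>)" if "0 \<le> \<tau>" "\<tau> \<le> T" for s \<tau>
  proof (cases "a1 = 0")
    case True
    then have "a2 = 1" using a by simp
    then show ?thesis using True R1nn[OF that(1)] unfolding hh_def by simp
  next
    case False
    show ?thesis
    proof (cases "a2 = 0")
      case True
      then have "a1 = 1" using a by simp
      then show ?thesis using True R2nn[OF that] unfolding hh_def by simp
    next
      case False2: False
      have "a1 * min (R1 (s, \<tau>) / a1) (R2 (s, \<tau>) / a2) \<le> a1 * (R1 (s, \<tau>) / a1)"
        using a(1) by (intro mult_left_mono) auto
      moreover have "a2 * min (R1 (s, \<tau>) / a1) (R2 (s, \<tau>) / a2) \<le> a2 * (R2 (s, \<tau>) / a2)"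
        using a(2) by (intro mult_left_mono) auto
      ultimately show ?thesis using False False2 unfolding hh_def by simp
    qed
  qed
  have avg1: "avg_rate D H beta0 P T 1 (yr D V s) (q1 \<tau>) = R1 (s, \<tau>)
      \<and> (\<lambda>t. q1 \<tau> t * log 2 (1 + P * chan_gain D H beta0 1 (yr D V s t))) integrable_on {0..T}"
    if "0 \<le> \<tau>" "\<tau> \<le> T" for s \<tau>
  proof -
    have "((\<lambda>t. q1 \<tau> t * F1 s t) has_integral integral {0..\<tau>} (F1 s)) {0..T}"
      by (rule ramp_int1[OF F1s that])
    then have "((\<lambda>t. q1 \<tau> t * log 2 (1 + P * chan_gain D H beta0 1 (yr D V s t))) has_integral integral {0..\<tau>} (F1 s)) {0..T}"
      unfolding gain1 F1_def G_def .
    then show ?thesis unfolding avg_rate_def R1_def by auto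
  qed
  have avg2: "avg_rate D H beta0 P T 2 (yr D V s) (q2 \<tau>) = R2 (s, \<tau>)
      \<and> (\<lambda>t. q2 \<tau> t * log 2 (1 + P * chan_gain D H beta0 2 (yr D V s t))) integrable_on {0..T}"
    if "0 \<le> \<tau>" "\<tau> \<le> T" for s \<tau>
  proof -
    have "((\<lambda>t. q2 \<tau> t * F2 s t) has_integral integral {\<tau>..T} (F2 s)) {0..T}"
      by (rule ramp_int2[OF F2s that])
    then have "((\<lambda>t. q2 \<tau> t * log 2 (1 + P * chan_gain D H beta0 2 (yr D V s t))) has_integral integral {\<tau>..T} (F2 s)) {0..T}"
      unfolding gain2 F2_def G_def .
    then show ?thesis unfolding avg_rate_def R2eq[OF that] by auto
  qed
  have feas: "feasible_P6 D H beta0 P T V a1 a2 (hh p0) (yr D V s0) (q1 \<tau>0) (q2 \<tau>0)"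
  proof -
    have l: "\<forall>s\<in>{0..T}. \<forall>t\<in>{0..T}. \<bar>yr D V s0 t - yr D V s0 s\<bar> \<le> V * \<bar>t - s\<bar>"
      using yr_lip[OF V] by blast
    have sc: "\<forall>t\<in>{0..T}. q1 \<tau>0 t \<in> {0, 1} \<and> q2 \<tau>0 t \<in> {0, 1} \<and> q1 \<tau>0 t + q2 \<tau>0 t \<le> 1"
      by (simp add: q1_def q2_def)
    have A1: "avg_rate D H beta0 P T 1 (yr D V s0) (q1 \<tau>0) = R1 p0"
      and I1: "(\<lambda>t. q1 \<tau>0 t * log 2 (1 + P * chan_gain D H beta0 1 (yr D V s0 t))) integrable_on {0..T}"
      using avg1[OF t0, of s0] st0 by auto
    have A2: "avg_rate D H beta0 P T 2 (yr D V s0) (q2 \<tau>0) = R2 p0"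
      and I2: "(\<lambda>t. q2 \<tau>0 t * log 2 (1 + P * chan_gain D H beta0 2 (yr D V s0 t))) integrable_on {0..T}"
      using avg2[OF t0, of s0] st0 by auto
    have H1: "a1 * hh p0 \<le> R1 p0" and H2: "a2 * hh p0 \<le> R2 p0" using hh_ach[OF t0, of s0] st0 by auto
    show ?thesis unfolding feasible_P6_def A1 A2
      using l sc I1 I2 H1 H2 by blast
  qed
  have opt: "\<forall>r' x' pi1' pi2'. feasible_P6 D H beta0 P T V a1 a2 r' x' pi1' pi2' \<longrightarrow> r' \<le> hh p0"
  proof (intro allI impI)
    fix r' x' pi1' pi2'
    assume f: "feasible_P6 D H beta0 P T V a1 a2 r' x' pi1' pi2'"
    have l: "\<forall>s\<in>{0..T}. \<forall>t\<in>{0..T}. \<bar>x' t - x' s\<bar> \<le> V * \<bar>t - s\<bar>"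
      using f unfolding feasible_P6_def by blast
    have sc: "\<forall>t\<in>{0..T}. pi1' t \<in> {0, 1} \<and> pi2' t \<in> {0, 1} \<and> pi1' t + pi2' t \<le> 1"
      using f unfolding feasible_P6_def by blast
    have i1: "(\<lambda>t. pi1' t * Gd H beta0 P (x' t + D / 2)) integrable_on {0..T}"
      using f unfolding feasible_P6_def gain1 by blast
    have i2: "(\<lambda>t. pi2' t * Gd H beta0 P (x' t - D / 2)) integrable_on {0..T}"
      using f unfolding feasible_P6_def gain2 by blast
    have r1: "a1 * r' \<le> integral {0..T} (\<lambda>t. pi1' t * Gd H beta0 P (x' t + D / 2)) / T"
      using f unfolding feasible_P6_def avg_rate_def gain1 by simp
    have r2: "a2 * r' \<le> integral {0..T} (\<lambda>t. pi2' t * Gd H beta0 P (x' t - D / 2)) / T"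
      using f unfolding feasible_P6_def avg_rate_def gain2 by simp
    obtain s \<tau> where st: "s \<in> {- D / V..T}" "\<tau> \<in> {0..T}"
      and le1: "integral {0..T} (\<lambda>t. pi1' t * Gd H beta0 P (x' t + D / 2)) \<le> integral {0..\<tau>} (\<lambda>t. Gd H beta0 P (yr D V s t + D / 2))"
      and le2: "integral {0..T} (\<lambda>t. pi2' t * Gd H beta0 P (x' t - D / 2)) \<le> integral {\<tau>..T} (\<lambda>t. Gd H beta0 P (yr D V s t - D / 2))"
      using dom[OF D H b P T V l sc i1 i2] by blast
    have "integral {0..T} (\<lambda>t. pi1' t * Gd H beta0 P (x' t + D / 2)) / T \<le> R1 (s, \<tau>)"
      using le1 T unfolding R1_def F1_def G_def by (simp add: divide_right_mono)
    then have "a1 * r' \<le> R1 (s, \<tau>)" using r1 by linarith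
    moreover have "integral {0..T} (\<lambda>t. pi2' t * Gd H beta0 P (x' t - D / 2)) / T \<le> R2 (s, \<tau>)"
    proof -
      have "R2 (s, \<tau>) = integral {\<tau>..T} (F2 s) / T" using st by (intro R2eq) auto
      then show ?thesis using le2 T unfolding F2_def G_def by (simp add: divide_right_mono)
    qed
    then have "a2 * r' \<le> R2 (s, \<tau>)" using r2 by linarith
    ultimately have "r' \<le> hh (s, \<tau>)" by (rule hh_le)
    also have "\<dots> \<le> hh p0" using p0(2) st unfolding K_def by blast
    finally show "r' \<le> hh p0" .
  qed
  have hf: "hfh D T V (yr D V s0) (yr D V s0 0) (yr D V s0 T) (max 0 s0) (max 0 (T - s0 - D / V)) \<and>
    (- D / 2 < yr D V s0 0 \<and> yr D V s0 T < D / 2 \<longrightarrow> max 0 s0 = 0 \<and> max 0 (T - s0 - D / V) = 0 \<and> V * T = yr D V s0 T - yr D V s0 0) \<and>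
    (- D / 2 = yr D V s0 0 \<and> yr D V s0 T < D / 2 \<longrightarrow> max 0 s0 = T - (yr D V s0 T - yr D V s0 0) / V \<and> max 0 (T - s0 - D / V) = 0) \<and>
    (- D / 2 < yr D V s0 0 \<and> yr D V s0 T = D / 2 \<longrightarrow> max 0 s0 = 0 \<and> max 0 (T - s0 - D / V) = T - (yr D V s0 T - yr D V s0 0) / V) \<and>
    (- D / 2 = yr D V s0 0 \<and> yr D V s0 0 < yr D V s0 T \<and> yr D V s0 T = D / 2 \<longrightarrow> max 0 s0 + max 0 (T - s0 - D / V) + D / V = T)"
    by (rule ramp_hfh[OF D T V s0])
  show ?thesis
    apply (rule exI[of _ "hh p0"], rule exI[of _ "yr D V s0"], rule exI[of _ "q1 \<tau>0"], rule exI[of _ "q2 \<tau>0"])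
    apply (rule exI[of _ "yr D V s0 0"], rule exI[of _ "yr D V s0 T"], rule exI[of _ "max 0 s0"], rule exI[of _ "max 0 (T - s0 - D / V)"])
    using feas opt hf by blast
qed

end
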